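(* Let $x,v$ be positive integers with $xv\ge2$. Let $\lambda=(x,\dots,x)$ with $x$ occurring $v$ times and $\lambda'=(v,\dots,v)$ with $v$ occurring $x$ times. Then the posets $P(\lambda)$ and $P(\lambda')$ are isomorphic.
   Context: For a vector $\mu=(\mu_1,\dots,\mu_d)$ of positive integers with sum $n\ge2$, $\Delta_\mu=\mathrm{conv}(e_1,\dots,e_d,\mu)\subset\mathbb{R}^d$ has fundamental parallelepiped $\Pi_\mu=\{\sum_{i=1}^d\gamma_i(1,e_i)+\gamma_{d+1}(1,\mu):0\le\gamma_i<1\}\subset\mathbb{R}^{d+1}$. $P(\mu)$ is the set $\Pi_\mu\cap\mathbb{Z}^{d+1}$ ordered by $\sigma\preceq\tau$ iff $\tau-\sigma\in\Pi_\mu\cap\mathbb{Z}^{d+1}$. *)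

theory Defs
  imports Complex_Main
begin

text \<open>Points of Z^(d+1) are int lists of
length d+1; coordinate 0 is the first (homogenising) coordinate, coordinate j+1 corresponds
to e_(j+1). The coefficients g 0, ..., g (d-1) are \<gamma>_1..\<gamma>_d (for (1,e_i)) and
g d is \<gamma>_(d+1) (for (1,\<mu>)).\<close>

definition in_fund_par :: "nat list \<Rightarrow> int list \<Rightarrow> bool" where
  "in_fund_par mu p \<longleftrightarrow> length p = length mu + 1 \<and>
     (\<exists>g :: nat \<Rightarrow> real. (\<forall>i\<le>length mu. 0 \<le> g i \<and> g i < 1) \<and>
        real_of_int (p ! 0) = (\<Sum>i\<le>length mu. g i) \<and>
        (\<forall>j<length mu. real_of_int (p ! Suc j) = g j + g (length mu) * real (mu ! j)))"

definition PP :: "nat list \<Rightarrow> int list set" where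
  "PP mu = {p. in_fund_par mu p}"

definition PP_le :: "nat list \<Rightarrow> int list \<Rightarrow> int list \<Rightarrow> bool" where
  "PP_le mu s t \<longleftrightarrow> s \<in> PP mu \<and> t \<in> PP mu \<and> map2 (\<lambda>a b. a - b) t s \<in> PP mu"

definition PP_iso :: "nat list \<Rightarrow> nat list \<Rightarrow> bool" where
  "PP_iso mu nu \<longleftrightarrow> (\<exists>f. bij_betw f (PP mu) (PP nu) \<and>
     (\<forall>s\<in>PP mu. \<forall>t\<in>PP mu. PP_le mu s t \<longleftrightarrow> PP_le nu (f s) (f t)))"

end

theory Submission
  imports Defs
begin

definition cnd :: "nat \<Rightarrow> nat \<Rightarrow> int \<Rightarrow> int \<Rightarrow> bool" where
  "cnd x v a c \<longleftrightarrow> 0 \<le> int v * c - a \<and> int v * c - a < int x * int v - 1 \<and>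
     0 \<le> int x * a - c \<and> int x * a - c < int x * int v - 1"

lemma cnd_swap: "cnd v x c a = cnd x v a c"
  unfolding cnd_def by (auto simp: mult.commute)

lemma int_lt_frac:
  fixes k :: int
  assumes "- 1 < real_of_int k" "real_of_int k < 1"
  shows "k = 0"
  using assms by linarith

lemma char_fwd:
  assumes x: "0 < x" and v: "0 < v" and xv: "x * v \<ge> 2"
    and P: "in_fund_par (replicate v x) p"
  shows "\<exists>a c. p = a # replicate v c \<and> cnd x v a c"
proof -
  from P obtain g :: "nat \<Rightarrow> real" where
    len: "length p = v + 1" and
    gb: "\<forall>i\<le>v. 0 \<le> g i \<and> g i < 1" and
    s0: "real_of_int (p ! 0) = (\<Sum>i\<le>v. g i)" and
    sj: "\<forall>j<v. real_of_int (p ! Suc j) = g j + g v * real x"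
    unfolding in_fund_par_def by auto
  define t where "t = g v"
  define a where "a = p ! 0"
  define c where "c = p ! 1"
  have eqc: "p ! Suc j = c" if "j < v" for j
  proof -
    have "real_of_int (p ! Suc j - p ! Suc 0) = g j - g 0"
      using sj that v by simp
    moreover have "g j < 1" "0 \<le> g j" "g 0 < 1" "0 \<le> g 0" using gb that v by auto
    then have "g j - g 0 < 1" "- 1 < g j - g 0" by linarith+
    ultimately show ?thesis unfolding c_def using int_lt_frac[of "p ! Suc j - p ! Suc 0"]
      by simp
  qed
  have gj: "g j = real_of_int c - t * real x" if "j < v" for j
    using sj eqc[OF that] that unfolding t_def by force
  have "(\<Sum>i\<le>v. g i) = (\<Sum>i<v. g i) + g v"
    by (simp add: lessThan_Suc_atMost[symmetric])
  also have "(\<Sum>i<v. g i) = (\<Sum>i<v. real_of_int c - t * real x)"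
    using gj by (intro sum.cong) auto
  finally have sa: "real_of_int a = real v * (real_of_int c - t * real x) + t"
    using s0 unfolding a_def t_def by simp
  define N where "N = real x * real v - 1"
  have Npos: "N > 0" using xv unfolding N_def
    by (metis of_nat_mult of_nat_le_iff of_nat_numeral diff_gt_0_iff_gt less_le_trans one_less_numeral_iff semiring_norm(76) le_less)
  have e1: "real_of_int (int v * c - a) = t * N" using sa unfolding N_def by (simp add: algebra_simps)
  have g0: "g 0 = real_of_int c - t * real x" using gj[of 0] v by simp
  have "real_of_int (int x * a - c) = real x * real_of_int a - real_of_int c" by simp
  also have "\<dots> = real x * (real v * (real_of_int c - t * real x) + t) - real_of_int c"
    using sa by simp
  also have "\<dots> = g 0 * N" unfolding g0 N_def by (simp add: algebra_simps)
  finally have e2: "real_of_int (int x * a - c) = g 0 * N" .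
  have t01: "0 \<le> t" "t < 1" using gb unfolding t_def by auto
  have g01: "0 \<le> g 0" "g 0 < 1" using gb by auto
  have r1: "0 \<le> t * N" "t * N < N" using t01 Npos by (auto simp: mult_less_cancel_right2)
  have r2: "0 \<le> g 0 * N" "g 0 * N < N" using g01 Npos by (auto simp: mult_less_cancel_right2)
  have NN: "N = real_of_int (int x * int v - 1)" unfolding N_def by simp
  have "cnd x v a c"
    unfolding cnd_def using r1 r2 e1 e2 NN
    by (metis of_int_0_le_iff of_int_less_iff)
  moreover have "p = a # replicate v c"
  proof (rule nth_equalityI)
    show "length p = length (a # replicate v c)" using len by simp
    fix i assume "i < length p"
    then show "p ! i = (a # replicate v c) ! i"
      using len eqc unfolding a_def by (cases i) auto
  qed
  ultimately show ?thesis by blast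
qed

lemma char_bwd:
  assumes x: "0 < x" and v: "0 < v" and xv: "x * v \<ge> 2"
    and C: "cnd x v a c"
  shows "in_fund_par (replicate v x) (a # replicate v c)"
proof -
  define N where "N = real x * real v - 1"
  have Npos: "N > 0" using xv unfolding N_def
    by (metis of_nat_mult of_nat_le_iff of_nat_numeral diff_gt_0_iff_gt less_le_trans one_less_numeral_iff semiring_norm(76) le_less)
  have NN: "N = real_of_int (int x * int v - 1)" unfolding N_def by simp
  define g where "g i = (if i < v then real_of_int (int x * a - c) / N else real_of_int (int v * c - a) / N)" for i
  have b1: "0 \<le> real_of_int (int x * a - c)" "real_of_int (int x * a - c) < N"
    "0 \<le> real_of_int (int v * c - a)" "real_of_int (int v * c - a) < N"
    using C unfolding cnd_def NN by linarith+
  have gb: "\<forall>i\<le>v. 0 \<le> g i \<and> g i < 1"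
    using b1 Npos unfolding g_def by auto
  have "(\<Sum>i\<le>v. g i) = (\<Sum>i<v. g i) + g v"
    by (simp add: lessThan_Suc_atMost[symmetric])
  also have "(\<Sum>i<v. g i) = (\<Sum>i<v. real_of_int (int x * a - c) / N)"
    unfolding g_def by (intro sum.cong) auto
  finally have "(\<Sum>i\<le>v. g i) = real v * (real_of_int (int x * a - c) / N) + real_of_int (int v * c - a) / N"
    unfolding g_def by simp
  also have "\<dots> = (real v * real_of_int (int x * a - c) + real_of_int (int v * c - a)) / N"
    by (simp add: add_divide_distrib)
  also have "real v * real_of_int (int x * a - c) + real_of_int (int v * c - a) = real_of_int a * N"
    unfolding N_def by (simp add: algebra_simps)
  also have "real_of_int a * N / N = real_of_int a" using Npos by simp
  finally have s0: "real_of_int a = (\<Sum>i\<le>v. g i)" by simp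
  have sj: "real_of_int c = g j + g v * real x" if "j < v" for j
  proof -
    have "g j + g v * real x = (real_of_int (int x * a - c) + real_of_int (int v * c - a) * real x) / N"
      using that unfolding g_def by (simp add: add_divide_distrib)
    also have "\<dots> = real_of_int c" using Npos unfolding N_def
      by (simp add: field_simps)
    finally show ?thesis by simp
  qed
  show ?thesis unfolding in_fund_par_def
    using gb s0 sj by (intro conjI exI[of _ g]) (auto simp: nth_Cons')
qed

lemma charPP:
  assumes "0 < x" "0 < v" "x * v \<ge> 2"
  shows "p \<in> PP (replicate v x) \<longleftrightarrow> (\<exists>a c. p = a # replicate v c \<and> cnd x v a c)"
  using char_fwd[OF assms] char_bwd[OF assms] unfolding PP_def by blast

lemma rep_inj:
  assumes "0 < v" "a # replicate v c = a' # replicate v c'"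
  shows "a = a' \<and> c = c'"
  using assms by (cases v) auto

lemma map2_rep:
  "map2 (\<lambda>a b. a - b) (a' # replicate v c') (a # replicate v (c::int)) = (a' - a) # replicate v (c' - c)"
  by (simp add: zip_replicate)

theorem corollary4p2:
  fixes x v :: nat
  assumes "0 < x" and "0 < v" and "x * v \<ge> 2"
  shows "PP_iso (replicate v x) (replicate x v)"
proof -
  have as2: "0 < v" "0 < x" "v * x \<ge> 2" using assms by (auto simp: mult.commute)
  note C1 = charPP[OF assms]
  note C2 = charPP[OF as2]
  define f where "f p = (p ! 1) # replicate x (p ! 0)" for p :: "int list"
  define h where "h p = (p ! 1) # replicate v (p ! 0)" for p :: "int list"
  have fe: "f (a # replicate v c) = c # replicate x a" for a c
    unfolding f_def using assms by (cases v) auto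
  have he: "h (a # replicate x c) = c # replicate v a" for a c
    unfolding h_def using assms by (cases x) auto
  have bij: "bij_betw f (PP (replicate v x)) (PP (replicate x v))"
  proof (rule bij_betw_byWitness[where f' = h])
    show "\<forall>p\<in>PP (replicate v x). h (f p) = p"
    proof
      fix p assume "p \<in> PP (replicate v x)"
      then obtain a c where "p = a # replicate v c" using C1 by blast
      then show "h (f p) = p" by (simp add: fe he)
    qed
    show "\<forall>p\<in>PP (replicate x v). f (h p) = p"
    proof
      fix p assume "p \<in> PP (replicate x v)"
      then obtain a c where "p = a # replicate x c" using C2 by blast
      then show "f (h p) = p" by (simp add: fe he)
    qed
    show "f ` PP (replicate v x) \<subseteq> PP (replicate x v)"
    proof
      fix q assume "q \<in> f ` PP (replicate v x)"
      then obtain p where p: "p \<in> PP (replicate v x)" "q = f p" by blast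
      then obtain a c where "p = a # replicate v c" "cnd x v a c" using C1 by blast
      then have "q = c # replicate x a" "cnd v x c a" using p(2) fe cnd_swap[of v x c a] by simp_all
      then show "q \<in> PP (replicate x v)" using C2 by blast
    qed
    show "h ` PP (replicate x v) \<subseteq> PP (replicate v x)"
    proof
      fix q assume "q \<in> h ` PP (replicate x v)"
      then obtain p where p: "p \<in> PP (replicate x v)" "q = h p" by blast
      then obtain a c where "p = a # replicate x c" "cnd v x a c" using C2 by blast
      then have "q = c # replicate v a" "cnd x v c a" using p(2) he cnd_swap[of x v c a] by simp_all
      then show "q \<in> PP (replicate v x)" using C1 by blast
    qed
  qed
  have ord: "PP_le (replicate v x) s t \<longleftrightarrow> PP_le (replicate x v) (f s) (f t)"
    if s: "s \<in> PP (replicate v x)" and t: "t \<in> PP (replicate v x)" for s t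
  proof -
    obtain a c where sa: "s = a # replicate v c" "cnd x v a c" using s C1 by blast
    obtain a' c' where ta: "t = a' # replicate v c'" "cnd x v a' c'" using t C1 by blast
    have fs: "f s \<in> PP (replicate x v)" "f t \<in> PP (replicate x v)"
      using bij_betw_apply[OF bij s] bij_betw_apply[OF bij t] by auto
    have "map2 (\<lambda>a b. a - b) t s \<in> PP (replicate v x) \<longleftrightarrow> cnd x v (a' - a) (c' - c)"
    proof
      assume "map2 (\<lambda>a b. a - b) t s \<in> PP (replicate v x)"
      then obtain a2 c2 where "(a' - a) # replicate v (c' - c) = a2 # replicate v c2" "cnd x v a2 c2"
        unfolding sa ta map2_rep C1 by blast
      note hh = this
      from rep_inj[OF assms(2) hh(1)] have "a' - a = a2" "c' - c = c2" by auto
      then show "cnd x v (a' - a) (c' - c)" using hh(2) by (simp only:)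
    next
      assume "cnd x v (a' - a) (c' - c)"
      then show "map2 (\<lambda>a b. a - b) t s \<in> PP (replicate v x)"
        unfolding sa ta map2_rep C1 by blast
    qed
    moreover have "map2 (\<lambda>a b. a - b) (f t) (f s) \<in> PP (replicate x v) \<longleftrightarrow> cnd v x (c' - c) (a' - a)"
    proof
      assume "map2 (\<lambda>a b. a - b) (f t) (f s) \<in> PP (replicate x v)"
      then obtain a2 c2 where "(c' - c) # replicate x (a' - a) = a2 # replicate x c2" "cnd v x a2 c2"
        unfolding sa ta fe map2_rep C2 by blast
      note hh = this
      from rep_inj[OF assms(1) hh(1)] have "c' - c = a2" "a' - a = c2" by auto
      then show "cnd v x (c' - c) (a' - a)" using hh(2) by (simp only:)
    next
      assume "cnd v x (c' - c) (a' - a)"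
      then show "map2 (\<lambda>a b. a - b) (f t) (f s) \<in> PP (replicate x v)"
        unfolding sa ta fe map2_rep C2 by blast
    qed
    moreover have "cnd v x (c' - c) (a' - a) = cnd x v (a' - a) (c' - c)" by (rule cnd_swap)
    ultimately show ?thesis unfolding PP_le_def using s t fs by blast
  qed
  show ?thesis unfolding PP_iso_def using bij ord by blast
qed

end
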